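(* Let $M$ be a finite regular cell complex with cell weights $w_\sigma>0$. For every function $f$ on $M$ (i.e. combinatorial $0$-form), $$\int_M\Delta f=0.$$
   Context: $C_*(M)$ is the real cellular chain complex with boundary $\partial$, cells oriented, and inner product $\langle\sigma,\sigma'\rangle=\delta_{\sigma,\sigma'}w_\sigma$. A combinatorial differential $d$-form is a linear map $\omega:C_*(M)\to C_*(M)$ with $\omega(C_p)\subset C_{p-d}$ such that $\omega(\alpha)$ is a combination of $(p-d)$-dimensional faces of each $p$-cell $\alpha$; $\Omega^d(M)$ is their space. A function $f$ is a $0$-form, $f(\sigma)=f_\sigma\sigma$, and we write $f(\sigma)$ for $f_\sigma$. The differential is $d\omega=\partial\circ\omega-(-1)^d\omega\circ\partial$; $\Omega^*(M)$ carries the inner product $\langle u,v\rangle=\sum_\sigma\frac1{w_\sigma}\langle u(\sigma),v(\sigma)\rangle$, $d^*$ is the adjoint of $d$, and $\Delta=dd^*+d^*d$. Thus $\Delta f$ is again a $0$-form, i.e. a function. For a function $h$, $\int_M h=\sum_\sigma h(\sigma)$ over all cells of $M$. *)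

theory Defs
  imports Complex_Main
begin

text \<open>A finite regular cell complex, given combinatorially: a finite set C of cells,
a dimension function, the face relation (face b a: b is a face of a, including a itself)
and the incidence numbers inc a b = [a:b] of the cellular boundary
(boundary a = sum over b of inc a b times b), with respect to fixed orientations.\<close>

definition regular_cell_complex ::
  "'c set \<Rightarrow> ('c \<Rightarrow> nat) \<Rightarrow> ('c \<Rightarrow> 'c \<Rightarrow> bool) \<Rightarrow> ('c \<Rightarrow> 'c \<Rightarrow> real) \<Rightarrow> bool" where
  "regular_cell_complex C dm face inc \<longleftrightarrow>
     finite C \<and>
     (\<forall>a b. face b a \<longrightarrow> a \<in> C \<and> b \<in> C) \<and>
     (\<forall>a\<in>C. face a a) \<and>
     (\<forall>a b c. face c b \<longrightarrow> face b a \<longrightarrow> face c a) \<and>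
     (\<forall>a b. face b a \<longrightarrow> face a b \<longrightarrow> a = b) \<and>
     (\<forall>a b. face b a \<longrightarrow> dm b \<le> dm a) \<and>
     (\<forall>a b. face b a \<longrightarrow> dm b = dm a \<longrightarrow> a = b) \<and>
     (\<forall>a b. inc a b \<noteq> 0 \<longleftrightarrow> (face b a \<and> dm a = dm b + 1)) \<and>
     (\<forall>a b. inc a b \<noteq> 0 \<longrightarrow> inc a b = 1 \<or> inc a b = -1) \<and>
     (\<forall>a c. (\<Sum>b\<in>C. inc a b * inc b c) = 0)"

text \<open>Linear maps on chains are represented by their matrices w.r.t. the cell basis:
omega(a) = sum over b of om a b times b.\<close>

definition is_form ::
  "'c set \<Rightarrow> ('c \<Rightarrow> nat) \<Rightarrow> ('c \<Rightarrow> 'c \<Rightarrow> bool) \<Rightarrow> nat \<Rightarrow> ('c \<Rightarrow> 'c \<Rightarrow> real) \<Rightarrow> bool" where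
  "is_form C dm face d om \<longleftrightarrow>
     (\<forall>a b. om a b \<noteq> 0 \<longrightarrow> a \<in> C \<and> b \<in> C \<and> face b a \<and> dm a = dm b + d)"

definition comp_map :: "'c set \<Rightarrow> ('c \<Rightarrow> 'c \<Rightarrow> real) \<Rightarrow> ('c \<Rightarrow> 'c \<Rightarrow> real) \<Rightarrow> ('c \<Rightarrow> 'c \<Rightarrow> real)" where
  "comp_map C om eta = (\<lambda>a c. \<Sum>b\<in>C. eta a b * om b c)"

definition dform :: "'c set \<Rightarrow> ('c \<Rightarrow> 'c \<Rightarrow> real) \<Rightarrow> nat \<Rightarrow> ('c \<Rightarrow> 'c \<Rightarrow> real) \<Rightarrow> ('c \<Rightarrow> 'c \<Rightarrow> real)" where
  "dform C inc d om = (\<lambda>a c. comp_map C inc om a c - (-1)^d * comp_map C om inc a c)"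

text \<open>Inner product of forms: sum over sigma of (1/w sigma) <u(sigma), v(sigma)>,
with <tau,tau'> = delta w tau on chains.\<close>
definition form_inner :: "'c set \<Rightarrow> ('c \<Rightarrow> real) \<Rightarrow> ('c \<Rightarrow> 'c \<Rightarrow> real) \<Rightarrow> ('c \<Rightarrow> 'c \<Rightarrow> real) \<Rightarrow> real" where
  "form_inner C w u v = (\<Sum>s\<in>C. (1 / w s) * (\<Sum>t\<in>C. u s t * v s t * w t))"

definition codiff ::
  "'c set \<Rightarrow> ('c \<Rightarrow> nat) \<Rightarrow> ('c \<Rightarrow> 'c \<Rightarrow> bool) \<Rightarrow> ('c \<Rightarrow> 'c \<Rightarrow> real) \<Rightarrow> ('c \<Rightarrow> real)
     \<Rightarrow> nat \<Rightarrow> ('c \<Rightarrow> 'c \<Rightarrow> real) \<Rightarrow> ('c \<Rightarrow> 'c \<Rightarrow> real)" where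
  "codiff C dm face inc w k v =
     (THE u. is_form C dm face k u \<and>
        (\<forall>x. is_form C dm face k x \<longrightarrow>
              form_inner C w (dform C inc k x) v = form_inner C w x u))"

text \<open>Hodge Laplacian on Omega^k: d d^* + d^* d (d^* on Omega^0 is the zero map,
Omega^(-1) being zero).\<close>
definition laplacian ::
  "'c set \<Rightarrow> ('c \<Rightarrow> nat) \<Rightarrow> ('c \<Rightarrow> 'c \<Rightarrow> bool) \<Rightarrow> ('c \<Rightarrow> 'c \<Rightarrow> real) \<Rightarrow> ('c \<Rightarrow> real)
     \<Rightarrow> nat \<Rightarrow> ('c \<Rightarrow> 'c \<Rightarrow> real) \<Rightarrow> ('c \<Rightarrow> 'c \<Rightarrow> real)" where
  "laplacian C dm face inc w k om =
     (\<lambda>a c. (if k = 0 then 0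
             else dform C inc (k - 1) (codiff C dm face inc w (k - 1) om) a c)
           + codiff C dm face inc w k (dform C inc k om) a c)"

text \<open>A function f as a 0-form: f(sigma) = f sigma * sigma.\<close>
definition fun_form :: "'c set \<Rightarrow> ('c \<Rightarrow> real) \<Rightarrow> ('c \<Rightarrow> 'c \<Rightarrow> real)" where
  "fun_form C f = (\<lambda>a b. if a = b \<and> a \<in> C then f a else 0)"

definition integral0 :: "'c set \<Rightarrow> ('c \<Rightarrow> 'c \<Rightarrow> real) \<Rightarrow> real" where
  "integral0 C h = (\<Sum>s\<in>C. h s s)"

end

theory Submission
  imports Defs
begin

lemma rc_face_in: "regular_cell_complex C dm face inc \<Longrightarrow> face b a \<Longrightarrow> a \<in> C \<and> b \<in> C"
  unfolding regular_cell_complex_def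
  by (drule conjunct2, drule conjunct1) blast
lemma rc_refl: "regular_cell_complex C dm face inc \<Longrightarrow> a \<in> C \<Longrightarrow> face a a"
  unfolding regular_cell_complex_def
  by (drule conjunct2, drule conjunct2, drule conjunct1) blast
lemma rc_eq: "regular_cell_complex C dm face inc \<Longrightarrow> face b a \<Longrightarrow> dm b = dm a \<Longrightarrow> a = b"
  unfolding regular_cell_complex_def
  by (drule conjunct2, drule conjunct2, drule conjunct2, drule conjunct2, drule conjunct2,
      drule conjunct2, drule conjunct1) blast
lemma rc_fin: "regular_cell_complex C dm face inc \<Longrightarrow> finite C"
  unfolding regular_cell_complex_def by (drule conjunct1)

lemma sum_single:
  assumes "finite A" "a \<in> A" "\<And>x. x \<in> A \<Longrightarrow> x \<noteq> a \<Longrightarrow> f x = (0::real)"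
  shows "sum f A = f a"
proof -
  have "sum f A = f a + sum f (A - {a})" using assms(1,2) by (rule sum.remove)
  moreover have "sum f (A - {a}) = 0" using assms(3) by (intro sum.neutral) blast
  ultimately show ?thesis by simp
qed

lemma zf_diag:
  assumes R: "regular_cell_complex C dm face inc" and X: "is_form C dm face 0 x"
    and nz: "x a b \<noteq> 0"
  shows "a = b \<and> a \<in> C"
proof -
  have "a \<in> C" "face b a" "dm a = dm b" using X nz unfolding is_form_def by auto
  then have "b = a" using rc_eq[OF R, of b a] by simp
  then show ?thesis using \<open>a \<in> C\<close> by simp
qed

lemma zf_off: "regular_cell_complex C dm face inc \<Longrightarrow> is_form C dm face 0 x \<Longrightarrow> b \<noteq> a \<Longrightarrow> x a b = 0"
proof (rule ccontr)
  assume R: "regular_cell_complex C dm face inc" and X: "is_form C dm face 0 x" and ne: "b \<noteq> a"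
    and "x a b \<noteq> 0"
  then have "a = b" using zf_diag[OF R X] by simp
  then show False using ne by simp
qed

lemma dform0:
  assumes R: "regular_cell_complex C dm face inc" and X: "is_form C dm face 0 x"
    and s: "s \<in> C" and t: "t \<in> C"
  shows "dform C inc 0 x s t = inc s t * (x s s - x t t)"
proof -
  have 1: "comp_map C inc x s t = x s s * inc s t"
    unfolding comp_map_def
    by (rule sum_single[OF rc_fin[OF R], where a=s]) (use s zf_off[OF R X] in auto)
  have 2: "comp_map C x inc s t = inc s t * x t t"
    unfolding comp_map_def
    by (rule sum_single[OF rc_fin[OF R], where a=t]) (use t zf_off[OF R X] in auto)
  show ?thesis unfolding dform_def 1 2 by (simp add: algebra_simps)
qed

lemma inner0:
  assumes R: "regular_cell_complex C dm face inc" and X: "is_form C dm face 0 x"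
    and W: "\<forall>s\<in>C. w s > 0"
  shows "form_inner C w x u = (\<Sum>s\<in>C. x s s * u s s)"
  unfolding form_inner_def
proof (rule sum.cong[OF refl])
  fix s assume s: "s \<in> C"
  have "(\<Sum>t\<in>C. x s t * u s t * w t) = x s s * u s s * w s"
    by (rule sum_single[OF rc_fin[OF R], where a=s]) (use s zf_off[OF R X] in auto)
  then show "1 / w s * (\<Sum>t\<in>C. x s t * u s t * w t) = x s s * u s s"
  proof -
    have "w s \<noteq> 0" using W s by auto
    then show ?thesis using \<open>(\<Sum>t\<in>C. x s t * u s t * w t) = x s s * u s s * w s\<close> by simp
  qed
qed

lemma codiff0_spec:
  assumes R: "regular_cell_complex C dm face inc" and W: "\<forall>s\<in>C. w s > 0"
  shows "is_form C dm face 0 (codiff C dm face inc w 0 v) \<and>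
        (\<forall>x. is_form C dm face 0 x \<longrightarrow>
              form_inner C w (dform C inc 0 x) v = form_inner C w x (codiff C dm face inc w 0 v))"
proof -
  define U where "U a = (\<Sum>t\<in>C. (w t / w a) * inc a t * v a t) - (\<Sum>s\<in>C. (w a / w s) * inc s a * v s a)" for a
  define u where "u a b = (if a = b \<and> a \<in> C then U a else 0)" for a b
  let ?P = "\<lambda>u. is_form C dm face 0 u \<and>
        (\<forall>x. is_form C dm face 0 x \<longrightarrow> form_inner C w (dform C inc 0 x) v = form_inner C w x u)"
  have uf: "is_form C dm face 0 u"
    unfolding is_form_def u_def using rc_refl[OF R] by auto
  have key: "form_inner C w (dform C inc 0 x) v = form_inner C w x u"
    if X: "is_form C dm face 0 x" for x
  proof -
    have "form_inner C w (dform C inc 0 x) v =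
       (\<Sum>s\<in>C. \<Sum>t\<in>C. (w t / w s) * inc s t * v s t * x s s) -
       (\<Sum>s\<in>C. \<Sum>t\<in>C. (w t / w s) * inc s t * v s t * x t t)"
      unfolding form_inner_def sum_subtractf[symmetric] sum_distrib_left
      by (intro sum.cong refl) (simp add: dform0[OF R X] algebra_simps)
    also have "(\<Sum>s\<in>C. \<Sum>t\<in>C. (w t / w s) * inc s t * v s t * x t t)
        = (\<Sum>t\<in>C. \<Sum>s\<in>C. (w t / w s) * inc s t * v s t * x t t)"
      by (rule sum.swap)
    also have "(\<Sum>s\<in>C. \<Sum>t\<in>C. (w t / w s) * inc s t * v s t * x s s) -
        (\<Sum>t\<in>C. \<Sum>s\<in>C. (w t / w s) * inc s t * v s t * x t t) = (\<Sum>a\<in>C. x a a * U a)"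
      unfolding U_def sum_subtractf[symmetric] right_diff_distrib sum_distrib_left
      by (intro sum.cong refl) (simp add: algebra_simps)
    also have "\<dots> = form_inner C w x u"
      unfolding inner0[OF R X W] u_def by simp
    finally show ?thesis .
  qed
  have ex: "?P u" using uf key by blast
  have uniq: "y = u" if "?P y" for y
  proof (rule ext, rule ext)
    fix a b
    have yf: "is_form C dm face 0 y" using that by blast
    show "y a b = u a b"
    proof (cases "a = b \<and> a \<in> C")
      case True
      define e where "e c d = (if c = a \<and> d = a then (1::real) else 0)" for c d
      have ef: "is_form C dm face 0 e"
        unfolding is_form_def e_def using rc_refl[OF R] True by auto
      have "form_inner C w e y = form_inner C w e u"
        using that key[OF ef] ef by auto
      then have "(\<Sum>s\<in>C. e s s * y s s) = (\<Sum>s\<in>C. e s s * u s s)"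
        by (simp add: inner0[OF R ef W])
      moreover have "(\<Sum>s\<in>C. e s s * y s s) = e a a * y a a"
        by (rule sum_single[OF rc_fin[OF R], where a=a]) (use True in \<open>auto simp: e_def\<close>)
      moreover have "(\<Sum>s\<in>C. e s s * u s s) = e a a * u a a"
        by (rule sum_single[OF rc_fin[OF R], where a=a]) (use True in \<open>auto simp: e_def\<close>)
      ultimately show ?thesis using True by (simp add: e_def)
    next
      case False
      then have "y a b = 0" using zf_diag[OF R yf] by blast
      moreover have "u a b = 0" unfolding u_def using False by auto
      ultimately show ?thesis by simp
    qed
  qed
  have "?P (THE u. ?P u)" by (rule theI[of ?P u, OF ex uniq])
  then show ?thesis unfolding codiff_def .
qed

theorem corollary3p6:
  fixes C :: "'c set" and dm :: "'c \<Rightarrow> nat" and face :: "'c \<Rightarrow> 'c \<Rightarrow> bool"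
    and inc :: "'c \<Rightarrow> 'c \<Rightarrow> real" and w :: "'c \<Rightarrow> real" and f :: "'c \<Rightarrow> real"
  assumes "regular_cell_complex C dm face inc"
    and "\<forall>s\<in>C. w s > 0"
  shows "integral0 C (laplacian C dm face inc w 0 (fun_form C f)) = 0"
proof -
  note R = assms(1) and W = assms(2)
  define v where "v = dform C inc 0 (fun_form C f)"
  define u where "u = codiff C dm face inc w 0 v"
  define one where "one = fun_form C (\<lambda>_. 1)"
  have of: "is_form C dm face 0 one"
    unfolding is_form_def one_def fun_form_def using rc_refl[OF R] by auto
  have sp: "form_inner C w (dform C inc 0 one) v = form_inner C w one u"
    using codiff0_spec[OF R W] of unfolding u_def by blast
  have "dform C inc 0 one s t = 0" if "s \<in> C" "t \<in> C" for s t
    using dform0[OF R of that] that by (simp add: one_def fun_form_def)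
  then have "form_inner C w (dform C inc 0 one) v = 0"
    unfolding form_inner_def by simp
  moreover have "form_inner C w one u = (\<Sum>s\<in>C. one s s * u s s)" by (rule inner0[OF R of W])
  moreover have "(\<Sum>s\<in>C. one s s * u s s) = (\<Sum>s\<in>C. u s s)"
    by (rule sum.cong) (auto simp: one_def fun_form_def)
  ultimately have "(\<Sum>s\<in>C. u s s) = 0" using sp by simp
  then show ?thesis
    unfolding integral0_def laplacian_def u_def v_def by simp
qed

end
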